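(* Let $q$ be a prime power, let $\mathcal{F}=(\mathcal{F}_1,\ldots,\mathcal{F}_r)$ be a flag on $\mathbb{F}_{q^n}$ whose best friend is the subfield $\mathbb{F}_{q^m}$, and let $\beta\in\mathbb{F}_{q^n}^*\setminus\mathbb{F}_{q^m}^*$. If the code $\mathrm{Orb}_\beta(\mathcal{F})$ is disjoint, then $2mr\le d_f(\mathrm{Orb}_\beta(\mathcal{F}))$.
   Context: A flag on $\mathbb{F}_{q^n}$ is a sequence $(\mathcal{F}_1,\ldots,\mathcal{F}_r)$ of $\mathbb{F}_q$-subspaces with $\{0\}\subsetneq\mathcal{F}_1\subsetneq\cdots\subsetneq\mathcal{F}_r\subsetneq\mathbb{F}_{q^n}$. For $\beta\in\mathbb{F}_{q^n}^*$ of multiplicative order $|\beta|$, $\mathcal{U}\beta=\{u\beta:u\in\mathcal{U}\}$, $\mathcal{F}\beta=(\mathcal{F}_1\beta,\ldots,\mathcal{F}_r\beta)$ and $\mathrm{Orb}_\beta(\mathcal{F})=\{\mathcal{F}\beta^j:0\le j\le|\beta|-1\}$. A subfield $\mathbb{F}_{q^m}$ is a friend of $\mathcal{F}$ if every $\mathcal{F}_i$ is an $\mathbb{F}_{q^m}$-vector space; the best friend is the largest friend. Subspace distance $d_S(\mathcal{U},\mathcal{V})=\dim(\mathcal{U}+\mathcal{V})-\dim(\mathcal{U}\cap\mathcal{V})$; flag distance $d_f(\mathcal{F},\mathcal{F}')=\sum_i d_S(\mathcal{F}_i,\mathcal{F}'_i)$; the minimum distance of a set of flags is the minimum over distinct pairs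 (and $0$ for a single flag). A set $\mathcal{C}$ of flags is disjoint if the sets $\mathcal{C}_i$ of $i$-th subspaces satisfy $|\mathcal{C}_1|=\cdots=|\mathcal{C}_r|=|\mathcal{C}|$. *)

theory Defs
  imports "HOL-Algebra.Algebra" "HOL-Algebra.Embedded_Algebras" "HOL-Algebra.Multiplicative_Group"
begin

(* The field F_{q^n} is a finite field R (HOL-Algebra) with q^n elements.
   Its subfield F_{q^m} (for m dvd n) is the set of roots of X^(q^m) - X. *)
definition subfield_of_order :: "('a, 'b) ring_scheme \<Rightarrow> nat \<Rightarrow> nat \<Rightarrow> 'a set" where
  "subfield_of_order R q m = {x \<in> carrier R. x [^]\<^bsub>R\<^esub> (q ^ m) = x}"

abbreviation base_field :: "('a, 'b) ring_scheme \<Rightarrow> nat \<Rightarrow> 'a set" where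
  "base_field R q \<equiv> subfield_of_order R q 1"

definition is_subspace :: "('a, 'b) ring_scheme \<Rightarrow> 'a set \<Rightarrow> 'a set \<Rightarrow> bool" where
  "is_subspace R K U \<longleftrightarrow> U \<subseteq> carrier R \<and> \<zero>\<^bsub>R\<^esub> \<in> U \<and>
     (\<forall>u\<in>U. \<forall>v\<in>U. u \<oplus>\<^bsub>R\<^esub> v \<in> U) \<and> (\<forall>c\<in>K. \<forall>u\<in>U. c \<otimes>\<^bsub>R\<^esub> u \<in> U)"

definition dim_over :: "('a, 'b) ring_scheme \<Rightarrow> 'a set \<Rightarrow> 'a set \<Rightarrow> nat" where
  "dim_over R K U = (THE d. ring.dimension R d K U)"

definition subspace_dist :: "('a, 'b) ring_scheme \<Rightarrow> nat \<Rightarrow> 'a set \<Rightarrow> 'a set \<Rightarrow> nat" where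
  "subspace_dist R q U V =
     dim_over R (base_field R q) (U <+>\<^bsub>R\<^esub> V) - dim_over R (base_field R q) (U \<inter> V)"

definition is_flag :: "('a, 'b) ring_scheme \<Rightarrow> nat \<Rightarrow> 'a set list \<Rightarrow> bool" where
  "is_flag R q Fs \<longleftrightarrow> Fs \<noteq> [] \<and>
     (\<forall>i < length Fs. is_subspace R (base_field R q) (Fs ! i)) \<and>
     {\<zero>\<^bsub>R\<^esub>} \<subset> Fs ! 0 \<and>
     (\<forall>i. Suc i < length Fs \<longrightarrow> Fs ! i \<subset> Fs ! Suc i) \<and>
     last Fs \<subset> carrier R"

definition flag_dist :: "('a, 'b) ring_scheme \<Rightarrow> nat \<Rightarrow> 'a set list \<Rightarrow> 'a set list \<Rightarrow> nat" where
  "flag_dist R q F G = (\<Sum>i < length F. subspace_dist R q (F ! i) (G ! i))"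

definition min_flag_dist :: "('a, 'b) ring_scheme \<Rightarrow> nat \<Rightarrow> 'a set list set \<Rightarrow> nat" where
  "min_flag_dist R q C =
     (if card C \<le> 1 then 0 else Min {flag_dist R q F G | F G. F \<in> C \<and> G \<in> C \<and> F \<noteq> G})"

definition is_friend :: "('a, 'b) ring_scheme \<Rightarrow> nat \<Rightarrow> nat \<Rightarrow> 'a set list \<Rightarrow> nat \<Rightarrow> bool" where
  "is_friend R q n Fs m \<longleftrightarrow> m > 0 \<and> m dvd n \<and>
     (\<forall>i < length Fs. is_subspace R (subfield_of_order R q m) (Fs ! i))"

definition is_best_friend :: "('a, 'b) ring_scheme \<Rightarrow> nat \<Rightarrow> nat \<Rightarrow> 'a set list \<Rightarrow> nat \<Rightarrow> bool" where
  "is_best_friend R q n Fs m \<longleftrightarrow> is_friend R q n Fs m \<and> (\<forall>m'. is_friend R q n Fs m' \<longrightarrow> m' \<le> m)"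

definition scale_set :: "('a, 'b) ring_scheme \<Rightarrow> 'a set \<Rightarrow> 'a \<Rightarrow> 'a set" where
  "scale_set R U b = (\<lambda>u. u \<otimes>\<^bsub>R\<^esub> b) ` U"

definition scale_flag :: "('a, 'b) ring_scheme \<Rightarrow> 'a set list \<Rightarrow> 'a \<Rightarrow> 'a set list" where
  "scale_flag R Fs b = map (\<lambda>U. scale_set R U b) Fs"

definition orbit_code :: "('a, 'b) ring_scheme \<Rightarrow> 'a \<Rightarrow> 'a set list \<Rightarrow> 'a set list set" where
  "orbit_code R b Fs = {scale_flag R Fs (b [^]\<^bsub>R\<^esub> j) | j. j < group.ord (mult_of R) b}"

definition disjoint_code :: "nat \<Rightarrow> 'a set list set \<Rightarrow> bool" where
  "disjoint_code r C \<longleftrightarrow> (\<forall>i < r. card ((\<lambda>F. F ! i) ` C) = card C)"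

end

theory Submission
  imports Defs "HOL-Computational_Algebra.Primes"
begin



lemma (in cring) binomial_aux:
  assumes a: "a \<in> carrier R" and b: "b \<in> carrier R"
  shows "(a \<oplus> b) [^] (n::nat) = (\<Oplus>k\<in>{..n}. add_pow R (n choose k) (a [^] k \<otimes> b [^] (n - k)))"
proof (induction n)
  case 0
  then show ?case using a b by simp
next
  case (Suc n)
  define T where "T = (\<lambda>n k. add_pow R (n choose k) (a [^] (k::nat) \<otimes> b [^] (n - k)))"
  have Tc: "T n k \<in> carrier R" for n k unfolding T_def using a b by simp
  have T0: "T (Suc n) 0 = b \<otimes> T n 0" unfolding T_def using a b
    by (simp add: add_pow_rdistr m_comm)
  have TS: "T (Suc n) (Suc k) = a \<otimes> T n k \<oplus> b \<otimes> T n (Suc k)" if "k \<le> n" for k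
  proof (cases "k = n")
    case True
    then show ?thesis unfolding T_def using a b
      by (simp add: add_pow_rdistr m_comm m_assoc add_pow_def binomial_eq_0)
  next
    case False
    then have kn: "Suc k \<le> n" using that by simp
    have e1: "b [^] (Suc n - Suc k) = b [^] (n - Suc k) \<otimes> b"
    proof -
      have "n - k = Suc (n - Suc k)" using kn by simp
      then show ?thesis using b by simp
    qed
    have "T (Suc n) (Suc k) = add_pow R (n choose k) (a [^] Suc k \<otimes> b [^] (Suc n - Suc k))
         \<oplus> add_pow R (n choose Suc k) (a [^] Suc k \<otimes> b [^] (Suc n - Suc k))"
      unfolding T_def using a b by (simp add: add.nat_pow_mult)
    also have "add_pow R (n choose k) (a [^] Suc k \<otimes> b [^] (Suc n - Suc k)) = a \<otimes> T n k"
      unfolding T_def using a b by (simp add: add_pow_rdistr add_pow_ldistr m_comm m_assoc m_lcomm)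
    also have "add_pow R (n choose Suc k) (a [^] Suc k \<otimes> b [^] (Suc n - Suc k)) = b \<otimes> T n (Suc k)"
      unfolding T_def e1 using a b by (simp add: add_pow_rdistr add_pow_ldistr m_comm m_assoc m_lcomm)
    finally show ?thesis .
  qed
  have "(\<Oplus>k\<in>{..Suc n}. T (Suc n) k) = (\<Oplus>k\<in>{..n}. T (Suc n) (Suc k)) \<oplus> T (Suc n) 0"
    by (rule finsum_Suc2) (auto simp: Tc)
  also have "(\<Oplus>k\<in>{..n}. T (Suc n) (Suc k)) = (\<Oplus>k\<in>{..n}. a \<otimes> T n k \<oplus> b \<otimes> T n (Suc k))"
    by (rule finsum_cong') (auto simp: TS Tc a b)
  also have "\<dots> = (\<Oplus>k\<in>{..n}. a \<otimes> T n k) \<oplus> (\<Oplus>k\<in>{..n}. b \<otimes> T n (Suc k))"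
    by (rule finsum_addf) (auto simp: Tc a b)
  also have "(\<Oplus>k\<in>{..n}. a \<otimes> T n k) = a \<otimes> (\<Oplus>k\<in>{..n}. T n k)"
    by (rule finsum_rdistr[symmetric]) (auto simp: Tc a)
  also have "(\<Oplus>k\<in>{..n}. b \<otimes> T n (Suc k)) = b \<otimes> (\<Oplus>k\<in>{..n}. T n (Suc k))"
    by (rule finsum_rdistr[symmetric]) (auto simp: Tc b)
  also have "T (Suc n) 0 = b \<otimes> T n 0" by (rule T0)
  finally have "(\<Oplus>k\<in>{..Suc n}. T (Suc n) k) = a \<otimes> (\<Oplus>k\<in>{..n}. T n k) \<oplus> (b \<otimes> (\<Oplus>k\<in>{..n}. T n (Suc k)) \<oplus> b \<otimes> T n 0)"
    using a b Tc by (simp add: a_assoc finsum_closed)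
  also have "b \<otimes> (\<Oplus>k\<in>{..n}. T n (Suc k)) \<oplus> b \<otimes> T n 0 = b \<otimes> ((\<Oplus>k\<in>{..n}. T n (Suc k)) \<oplus> T n 0)"
    using b Tc by (simp add: r_distr finsum_closed)
  also have "(\<Oplus>k\<in>{..n}. T n (Suc k)) \<oplus> T n 0 = (\<Oplus>k\<in>{..Suc n}. T n k)"
    by (rule finsum_Suc2[symmetric]) (auto simp: Tc)
  also have "\<dots> = T n (Suc n) \<oplus> (\<Oplus>k\<in>{..n}. T n k)"
    by (rule finsum_Suc) (auto simp: Tc)
  also have "T n (Suc n) = \<zero>" unfolding T_def using a b by (simp add: add_pow_def binomial_eq_0)
  finally have "(\<Oplus>k\<in>{..Suc n}. T (Suc n) k) = (a \<oplus> b) \<otimes> (\<Oplus>k\<in>{..n}. T n k)"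
    using a b Tc by (simp add: finsum_closed l_distr)
  also have "\<dots> = (a \<oplus> b) \<otimes> (a \<oplus> b) [^] n" using Suc by (simp add: T_def)
  also have "\<dots> = (a \<oplus> b) [^] Suc n" using a b by (simp add: m_comm)
  finally show ?case by (simp add: T_def)
qed

lemma (in cring) add_pow_mult_one:
  "add_pow R ((m::nat) * n) \<one> = add_pow R m \<one> \<otimes> add_pow R n \<one>"
proof -
  have "add_pow R (m * n) \<one> = add_pow R n (add_pow R m \<one>)"
    by (simp add: add.nat_pow_pow)
  also have "\<dots> = add_pow R n (add_pow R m \<one> \<otimes> \<one>)" by simp
  also have "\<dots> = add_pow R m \<one> \<otimes> add_pow R n \<one>"
    by (simp add: add_pow_rdistr)
  finally show ?thesis .
qed

lemma (in cring) add_pow_power_one: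
  "add_pow R ((m::nat) ^ e) \<one> = (add_pow R m \<one>) [^] e"
proof (induction e)
  case 0 then show ?case by (simp add: add_pow_def)
next
  case (Suc e)
  have "add_pow R (m ^ Suc e) \<one> = add_pow R (m ^ e * m) \<one>" by (simp add: mult.commute)
  also have "\<dots> = add_pow R (m ^ e) \<one> \<otimes> add_pow R m \<one>" by (rule add_pow_mult_one)
  finally show ?case using Suc by (simp add: add_pow_def)
qed

lemma (in domain) pow_eq_zero_imp:
  assumes "x \<in> carrier R" "x [^] (e::nat) = \<zero>" shows "x = \<zero>"
  using assms(2)
proof (induction e)
  case 0 then show ?case by simp
next
  case (Suc e)
  then have "x [^] e \<otimes> x = \<zero>" by simp
  then show ?case using Suc assms(1) integral by blast
qed

lemma (in field) char_prime:
  assumes "finite (carrier R)" "card (carrier R) = (p::nat) ^ e" "Factorial_Ring.prime p"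
  shows "add_pow R p \<one> = \<zero>"
proof -
  have "add_pow R (order (add_monoid R)) \<one> = \<zero>"
    by (rule add.pow_order_eq_1) simp
  then have "add_pow R (p ^ e) \<one> = \<zero>" using assms(2) by (simp add: order_def)
  then have "(add_pow R p \<one>) [^] e = \<zero>" by (simp add: add_pow_power_one)
  then show ?thesis by (rule pow_eq_zero_imp[rotated]) simp
qed

lemma (in cring) frob:
  assumes p: "Factorial_Ring.prime (p::nat)" and c: "add_pow R p \<one> = \<zero>"
    and a: "a \<in> carrier R" and b: "b \<in> carrier R"
  shows "(a \<oplus> b) [^] p = a [^] p \<oplus> b [^] p"
proof -
  define T where "T = (\<lambda>k. add_pow R (p choose k) (a [^] (k::nat) \<otimes> b [^] (p - k)))"
  have Tc: "T k \<in> carrier R" for k unfolding T_def using a b by simp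
  have Tz: "T k = \<zero>" if "0 < k" "k < p" for k
  proof -
    have "p dvd (p choose k)" using dvd_choose_prime[of k p] that p by auto
    then obtain t where t: "p choose k = p * t" by blast
    have "add_pow R p (a [^] k \<otimes> b [^] (p - k)) = add_pow R p \<one> \<otimes> (a [^] k \<otimes> b [^] (p - k))"
      using a b by (simp add: add_pow_ldistr)
    also have "\<dots> = \<zero>" using c a b by simp
    finally have "add_pow R p (a [^] k \<otimes> b [^] (p - k)) = \<zero>" .
    moreover have "add_pow R (p * t) (a [^] k \<otimes> b [^] (p - k)) = add_pow R t (add_pow R p (a [^] k \<otimes> b [^] (p - k)))"
      using a b by (simp add: add.nat_pow_pow)
    ultimately show ?thesis unfolding T_def t using a b by simp
  qed
  obtain j where j: "p = Suc (Suc j)" using p prime_ge_2_nat[OF p]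
    by (metis add_2_eq_Suc le_Suc_ex)
  have "(a \<oplus> b) [^] p = (\<Oplus>k\<in>{..p}. T k)" unfolding T_def by (rule binomial_aux[OF a b])
  also have "\<dots> = T (Suc (Suc j)) \<oplus> (\<Oplus>k\<in>{..Suc j}. T k)"
    unfolding j by (rule finsum_Suc) (auto simp: Tc)
  also have "(\<Oplus>k\<in>{..Suc j}. T k) = (\<Oplus>k\<in>{..j}. T (Suc k)) \<oplus> T 0"
    by (rule finsum_Suc2) (auto simp: Tc)
  also have "(\<Oplus>k\<in>{..j}. T (Suc k)) = (\<Oplus>k\<in>{..j}. \<zero>)"
    by (rule finsum_cong') (auto simp: Tc j intro!: Tz)
  also have "\<dots> = \<zero>" by simp
  finally show ?thesis unfolding T_def j using a b by (simp add: add_pow_def)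
qed

lemma (in cring) frob_pow:
  assumes p: "Factorial_Ring.prime (p::nat)" and c: "add_pow R p \<one> = \<zero>"
    and a: "a \<in> carrier R" and b: "b \<in> carrier R"
  shows "(a \<oplus> b) [^] (p ^ j) = a [^] (p ^ j) \<oplus> b [^] (p ^ j)"
proof (induction j)
  case 0 then show ?case using a b by simp
next
  case (Suc j)
  have "(a \<oplus> b) [^] (p ^ Suc j) = ((a \<oplus> b) [^] (p ^ j)) [^] p"
    using a b by (simp add: nat_pow_pow mult.commute)
  also have "\<dots> = (a [^] (p ^ j)) [^] p \<oplus> (b [^] (p ^ j)) [^] p"
    using Suc frob[OF p c] a b by simp
  finally show ?case using a b by (simp add: nat_pow_pow mult.commute)
qed



lemma (in abelian_group) ab_aux:
  assumes c: "A \<in> carrier G" "B \<in> carrier G" "w \<in> carrier G" "w' \<in> carrier G"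
    and e: "A \<oplus> w = B \<oplus> w'"
  shows "A \<ominus> B = w' \<ominus> w"
proof -
  have "A = (A \<oplus> w) \<oplus> \<ominus> w" using c by (simp add: a_assoc r_neg)
  also have "\<dots> = (B \<oplus> w') \<oplus> \<ominus> w" using e by simp
  finally have "A \<ominus> B = ((B \<oplus> w') \<oplus> \<ominus> w) \<oplus> \<ominus> B" by (simp add: a_minus_def)
  also have "\<dots> = (B \<oplus> \<ominus> B) \<oplus> (w' \<oplus> \<ominus> w)" using c by (simp add: a_ac)
  also have "\<dots> = w' \<ominus> w" using c by (simp add: r_neg a_minus_def)
  finally show ?thesis .
qed

definition fieldlike :: "('a, 'b) ring_scheme \<Rightarrow> 'a set \<Rightarrow> bool" where
  "fieldlike R S \<longleftrightarrow> S \<subseteq> carrier R \<and> \<one>\<^bsub>R\<^esub> \<in> S \<and> \<zero>\<^bsub>R\<^esub> \<in> S \<and>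
     (\<forall>a\<in>S. \<forall>b\<in>S. a \<oplus>\<^bsub>R\<^esub> b \<in> S) \<and> (\<forall>a\<in>S. \<forall>b\<in>S. a \<otimes>\<^bsub>R\<^esub> b \<in> S) \<and>
     (\<forall>a\<in>S. \<ominus>\<^bsub>R\<^esub> a \<in> S) \<and> (\<forall>a\<in>S - {\<zero>\<^bsub>R\<^esub>}. inv\<^bsub>R\<^esub> a \<in> S)"

context field
begin

lemma space_neg:
  assumes "fieldlike R S" "is_subspace R S W" "w \<in> W" shows "\<ominus> w \<in> W"
proof -
  have "\<ominus> \<one> \<in> S" using assms(1) unfolding fieldlike_def by blast
  then have "\<ominus> \<one> \<otimes> w \<in> W" using assms(2,3) unfolding is_subspace_def by blast
  moreover have "w \<in> carrier R" using assms(2,3) unfolding is_subspace_def by blast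
  ultimately show ?thesis by (simp add: l_minus)
qed

lemma line_ext_space:
  assumes S: "fieldlike R S" and W: "is_subspace R S W" and v: "v \<in> carrier R"
  shows "is_subspace R S (line_extension S v W)"
proof -
  have Sc: "S \<subseteq> carrier R" and Wc: "W \<subseteq> carrier R" using S W unfolding fieldlike_def is_subspace_def by auto
  show ?thesis unfolding is_subspace_def
  proof (intro conjI ballI)
    show "line_extension S v W \<subseteq> carrier R" by (rule line_extension_in_carrier[OF Sc v Wc])
    show "\<zero> \<in> line_extension S v W" unfolding line_extension_mem_iff
      using S W v unfolding fieldlike_def is_subspace_def by (intro bexI[of _ \<zero>]) auto
  next
    fix x y assume x: "x \<in> line_extension S v W" and y: "y \<in> line_extension S v W"
    then obtain k1 w1 k2 w2 where k: "k1 \<in> S" "w1 \<in> W" "x = k1 \<otimes> v \<oplus> w1" "k2 \<in> S" "w2 \<in> W" "y = k2 \<otimes> v \<oplus> w2"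
      unfolding line_extension_mem_iff by blast
    have kc: "k1 \<in> carrier R" "k2 \<in> carrier R" "w1 \<in> carrier R" "w2 \<in> carrier R"
      using k Sc Wc by auto
    have "x \<oplus> y = (k1 \<oplus> k2) \<otimes> v \<oplus> (w1 \<oplus> w2)"
      unfolding k(3,6) using kc v by (simp add: l_distr a_ac)
    moreover have "k1 \<oplus> k2 \<in> S" using S k unfolding fieldlike_def by blast
    moreover have "w1 \<oplus> w2 \<in> W" using W k unfolding is_subspace_def by blast
    ultimately show "x \<oplus> y \<in> line_extension S v W" unfolding line_extension_mem_iff by blast
  next
    fix c x assume c: "c \<in> S" and x: "x \<in> line_extension S v W"
    then obtain k1 w1 where k: "k1 \<in> S" "w1 \<in> W" "x = k1 \<otimes> v \<oplus> w1"
      unfolding line_extension_mem_iff by blast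
    have kc: "c \<in> carrier R" "k1 \<in> carrier R" "w1 \<in> carrier R" using k c Sc Wc by auto
    have "c \<otimes> x = (c \<otimes> k1) \<otimes> v \<oplus> c \<otimes> w1"
      unfolding k(3) using kc v by (simp add: r_distr m_assoc)
    moreover have "c \<otimes> k1 \<in> S" using S k c unfolding fieldlike_def by blast
    moreover have "c \<otimes> w1 \<in> W" using W k c unfolding is_subspace_def by blast
    ultimately show "c \<otimes> x \<in> line_extension S v W" unfolding line_extension_mem_iff by blast
  qed
qed

lemma line_ext_card:
  assumes S: "fieldlike R S" and W: "is_subspace R S W" and v: "v \<in> carrier R" "v \<notin> W"
  shows "card (line_extension S v W) = card S * card W"
proof -
  have Sc: "S \<subseteq> carrier R" and Wc: "W \<subseteq> carrier R" using S W unfolding fieldlike_def is_subspace_def by auto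
  have eq: "line_extension S v W = (\<lambda>(s, w). s \<otimes> v \<oplus> w) ` (S \<times> W)"
  proof
    show "line_extension S v W \<subseteq> (\<lambda>(s, w). s \<otimes> v \<oplus> w) ` (S \<times> W)"
      unfolding line_extension_mem_iff by (auto simp: line_extension_mem_iff)
    show "(\<lambda>(s, w). s \<otimes> v \<oplus> w) ` (S \<times> W) \<subseteq> line_extension S v W"
    proof clarify
      fix s w assume "s \<in> S" "w \<in> W"
      then show "s \<otimes> v \<oplus> w \<in> line_extension S v W" unfolding line_extension_mem_iff by blast
    qed
  qed
  have inj: "inj_on (\<lambda>(s, w). s \<otimes> v \<oplus> w) (S \<times> W)"
  proof (rule inj_onI, clarify)
    fix s w s' w' assume s: "s \<in> S" "w \<in> W" "s' \<in> S" "w' \<in> W" and e: "s \<otimes> v \<oplus> w = s' \<otimes> v \<oplus> w'"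
    have sc: "s \<in> carrier R" "s' \<in> carrier R" "w \<in> carrier R" "w' \<in> carrier R" using s Sc Wc by auto
    show "s = s' \<and> w = w'"
    proof (cases "s = s'")
      case True
      then show ?thesis using e sc v by simp
    next
      case False
      define d where "d = s \<ominus> s'"
      have dS: "d \<in> S" unfolding d_def a_minus_def using S s unfolding fieldlike_def by blast
      have "s = (s \<ominus> s') \<oplus> s'" using sc by (simp add: a_minus_def a_assoc l_neg)
      then have d0: "d \<noteq> \<zero>" unfolding d_def using False sc by auto
      have "d \<otimes> v = s \<otimes> v \<ominus> s' \<otimes> v" unfolding d_def using sc v
        by (simp add: a_minus_def l_distr l_minus)
      also have "\<dots> = w' \<ominus> w" using e sc v by (intro ab_aux) auto
      finally have "d \<otimes> v = w' \<ominus> w" .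
      moreover have "w' \<ominus> w \<in> W" unfolding a_minus_def using W space_neg[OF S W s(2)] s
        unfolding is_subspace_def by blast
      ultimately have "d \<otimes> v \<in> W" by simp
      then have "inv d \<otimes> (d \<otimes> v) \<in> W" using S W dS d0 unfolding fieldlike_def is_subspace_def by blast
      moreover have "inv d \<otimes> (d \<otimes> v) = v"
      proof -
        have du: "d \<in> Units R" using dS d0 Sc field_Units by auto
        have "inv d \<otimes> (d \<otimes> v) = (inv d \<otimes> d) \<otimes> v" using m_assoc[OF Units_inv_closed[OF du] Units_closed[OF du] v(1)] by simp
        also have "\<dots> = v" using du v by (simp add: Units_l_inv)
        finally show ?thesis .
      qed
      ultimately show ?thesis using v by simp
    qed
  qed
  have "card (line_extension S v W) = card (S \<times> W)" unfolding eq by (rule card_image[OF inj])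
  then show ?thesis by (simp add: card_cartesian_product)
qed

lemma fieldlike_card2:
  assumes "fieldlike R S" "finite (carrier R)" shows "2 \<le> card S"
proof -
  have "{\<zero>, \<one>} \<subseteq> S" "finite S" using assms unfolding fieldlike_def by (auto intro: finite_subset)
  then have "card {\<zero>, \<one>} \<le> card S" by (rule card_mono[rotated])
  then show ?thesis by simp
qed

lemma zero_space: "fieldlike R S \<Longrightarrow> is_subspace R S {\<zero>}"
  unfolding is_subspace_def fieldlike_def by auto

lemma dim_card:
  assumes S: "fieldlike R S" and fin: "finite (carrier R)"
  shows "dimension d K E \<Longrightarrow> K = S \<Longrightarrow> is_subspace R S E \<and> card E = card S ^ d"
proof (induction d K E rule: dimension.induct)
  case (zero_dim K)
  then show ?case using zero_space[OF S] by simp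
next
  case (Suc_dim v E n K)
  then show ?case using line_ext_space[OF S _ Suc_dim(1)] line_ext_card[OF S _ Suc_dim(1,2)] by simp
qed

lemma space_finite: "is_subspace R S W \<Longrightarrow> finite (carrier R) \<Longrightarrow> finite W"
  unfolding is_subspace_def by (auto intro: finite_subset)

lemma line_ext_sub:
  assumes "is_subspace R S W" "E \<subseteq> W" "v \<in> W"
  shows "line_extension S v E \<subseteq> W"
proof
  fix x assume "x \<in> line_extension S v E"
  then obtain k e where "k \<in> S" "e \<in> E" "x = k \<otimes> v \<oplus> e" unfolding line_extension_mem_iff by blast
  then show "x \<in> W" using assms unfolding is_subspace_def by blast
qed

lemma exists_dim:
  assumes S: "fieldlike R S" and fin: "finite (carrier R)" and W: "is_subspace R S W"
  shows "\<exists>d. dimension d S W"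
proof -
  have "\<And>E d. is_subspace R S E \<Longrightarrow> E \<subseteq> W \<Longrightarrow> dimension d S E \<Longrightarrow> \<exists>d'. dimension d' S W"
  proof -
    fix E d
    show "is_subspace R S E \<Longrightarrow> E \<subseteq> W \<Longrightarrow> dimension d S E \<Longrightarrow> \<exists>d'. dimension d' S W"
    proof (induction "card W - card E" arbitrary: E d rule: less_induct)
      case less
      show ?case
      proof (cases "E = W")
        case True then show ?thesis using less by blast
      next
        case False
        then obtain v where v: "v \<in> W" "v \<notin> E" using less by blast
        have vc: "v \<in> carrier R" using v W unfolding is_subspace_def by blast
        have E'1: "is_subspace R S (line_extension S v E)" by (rule line_ext_space[OF S less(2) vc])
        have E'2: "line_extension S v E \<subseteq> W" by (rule line_ext_sub[OF W less(3) v(1)])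
        have E'3: "dimension (Suc d) S (line_extension S v E)" by (rule Suc_dim[OF vc v(2) less(4)])
        have c1: "card (line_extension S v E) = card S * card E" by (rule line_ext_card[OF S less(2) vc v(2)])
        have "card E \<ge> 1" using less(2) space_finite[OF less(2) fin] unfolding is_subspace_def
          by (metis One_nat_def Suc_leI card_gt_0_iff empty_iff)
        then have "card E < card (line_extension S v E)" using c1 fieldlike_card2[OF S fin] by simp
        moreover have "card (line_extension S v E) \<le> card W"
          using E'2 space_finite[OF W fin] by (rule card_mono[rotated])
        ultimately have "card W - card (line_extension S v E) < card W - card E" by simp
        then show ?thesis using less(1) E'1 E'2 E'3 by blast
      qed
    qed
  qed
  moreover have "{\<zero>} \<subseteq> W" using W unfolding is_subspace_def by blast
  ultimately show ?thesis using zero_space[OF S] dimension.zero_dim by blast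
qed

lemma dim_over_card:
  assumes S: "fieldlike R S" and fin: "finite (carrier R)" and W: "is_subspace R S W"
  shows "card W = card S ^ dim_over R S W"
proof -
  obtain d where d: "dimension d S W" using exists_dim[OF S fin W] by blast
  have cd: "card W = card S ^ d" using dim_card[OF S fin d] by simp
  have "dim_over R S W = d" unfolding dim_over_def
  proof (rule the_equality)
    show "dimension d S W" by (rule d)
  next
    fix d' assume "dimension d' S W"
    then have "card W = card S ^ d'" using dim_card[OF S fin] by blast
    then show "d' = d" using cd fieldlike_card2[OF S fin] power_inject_exp[of "card S" d' d]
      by simp
  qed
  then show ?thesis using cd by simp
qed

lemma space_card_strict:
  assumes S: "fieldlike R S" and fin: "finite (carrier R)" and W: "is_subspace R S W"
    and W': "is_subspace R S W'" and sub: "W \<subset> W'"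
  shows "card S * card W \<le> card W'"
proof -
  obtain v where v: "v \<in> W'" "v \<notin> W" using sub by blast
  have vc: "v \<in> carrier R" using v W' unfolding is_subspace_def by blast
  have "card S * card W = card (line_extension S v W)" using line_ext_card[OF S W vc v(2)] by simp
  also have "\<dots> \<le> card W'" using line_ext_sub[OF W' _ v(1)] sub space_finite[OF W' fin]
    by (intro card_mono) auto
  finally show ?thesis .
qed

end


context field
begin

lemma mult_of_same: "Ring_Divisibility.mult_of R = Multiplicative_Group.mult_of R"
  by (simp add: Ring_Divisibility.mult_of_def Multiplicative_Group.mult_of_def)

lemma gen_ord:
  assumes fin: "finite (carrier R)"
  obtains g where "g \<in> carrier R" "g \<noteq> \<zero>" "group.ord (Multiplicative_Group.mult_of R) g = card (carrier R) - 1"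
    "\<And>x. x \<in> carrier R \<Longrightarrow> x \<noteq> \<zero> \<Longrightarrow> \<exists>i < card (carrier R) - 1. x = g [^] i"
    "\<And>i. g [^] (i::nat) = \<one> \<longleftrightarrow> (card (carrier R) - 1) dvd i"
proof -
  interpret G: group "Multiplicative_Group.mult_of R" rewrites
      "([^]\<^bsub>Multiplicative_Group.mult_of R\<^esub>) = (([^]) :: _ \<Rightarrow> nat \<Rightarrow> _)" and "\<one>\<^bsub>Multiplicative_Group.mult_of R\<^esub> = \<one>"
    by (rule field_mult_group) (simp_all add: fun_eq_iff nat_pow_def)
  obtain g where g: "g \<in> carrier (Multiplicative_Group.mult_of R)" "carrier (Multiplicative_Group.mult_of R) = {g[^]i | i::nat . i \<in> UNIV}"
    using finite_field_mult_group_has_gen[OF fin] by blast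
  have gc: "g \<in> carrier R" "g \<noteq> \<zero>" using g(1) by auto
  define ordg where "ordg = G.ord g"
  have o1: "ordg \<ge> 1" unfolding ordg_def using G.ord_ge_1[OF finite_mult_of[OF fin] g(1)] .
  have go: "g [^] ordg = \<one>" unfolding ordg_def using G.pow_ord_eq_1[OF g(1)] .
  have rep: "\<exists>i < ordg. x = g [^] i" if x: "x \<in> carrier (Multiplicative_Group.mult_of R)" for x
  proof -
    obtain j where j: "x = g [^] (j::nat)" using x g(2) by blast
    have e: "g [^] (ordg * (j div ordg)) \<otimes> g [^] (j mod ordg) = g [^] (ordg * (j div ordg) + j mod ordg)"
      using gc by (simp add: nat_pow_mult)
    have "g [^] j = g [^] (ordg * (j div ordg)) \<otimes> g [^] (j mod ordg)"
      unfolding e by simp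
    also have "\<dots> = (g [^] ordg) [^] (j div ordg) \<otimes> g [^] (j mod ordg)"
      using gc by (simp add: nat_pow_pow)
    also have "\<dots> = g [^] (j mod ordg)" using go gc by simp
    finally show ?thesis using j o1 by (intro exI[of _ "j mod ordg"]) auto
  qed
  have N: "order (Multiplicative_Group.mult_of R) = card (carrier R) - 1"
    using order_mult_of[OF fin] by (simp add: order_def)
  have "carrier (Multiplicative_Group.mult_of R) \<subseteq> (\<lambda>i. g [^] i) ` {..<ordg}" using rep by blast
  then have "card (carrier (Multiplicative_Group.mult_of R)) \<le> ordg"
    by (metis card_image_le card_lessThan finite_lessThan le_trans card_mono finite_imageI)
  then have le: "card (carrier R) - 1 \<le> ordg" using N by (simp add: order_def)
  have "ordg dvd card (carrier R) - 1" unfolding ordg_def using G.ord_dvd_group_order[OF g(1)] N by simp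
  moreover have "card (carrier R) - 1 > 0"
  proof -
    have "{\<zero>, \<one>} \<subseteq> carrier R" by simp
    then have "card {\<zero>, \<one>} \<le> card (carrier R)" using fin by (rule card_mono[rotated])
    then show ?thesis by simp
  qed
  ultimately have oN: "ordg = card (carrier R) - 1" using le by (simp add: dvd_imp_le le_antisym)
  show ?thesis
  proof (rule that[OF gc])
    show "group.ord (Multiplicative_Group.mult_of R) g = card (carrier R) - 1" using oN ordg_def by simp
    show "\<exists>i<card (carrier R) - 1. x = g [^] i" if "x \<in> carrier R" "x \<noteq> \<zero>" for x
      using rep[of x] that oN by simp
    show "g [^] (i::nat) = \<one> \<longleftrightarrow> (card (carrier R) - 1) dvd i" for i
      using G.pow_eq_id[OF g(1)] oN ordg_def by simp
  qed
qed

lemma pow_eq_zero_imp_aux: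
  assumes "x \<in> carrier R" "x [^] (e::nat) = \<zero>" shows "x = \<zero>"
  using assms(2)
proof (induction e)
  case 0 then show ?case by simp
next
  case (Suc e)
  then have "x [^] e \<otimes> x = \<zero>" by simp
  then show ?case using Suc assms(1) integral by blast
qed

lemma pow_inj_gen:
  assumes gc: "g \<in> carrier R" "g \<noteq> \<zero>" and gi: "\<And>i. g [^] (i::nat) = \<one> \<longleftrightarrow> N dvd i"
  shows "inj_on (\<lambda>i::nat. g [^] i) {..<N}"
proof -
  have *: "a = b" if "a < N" "b < N" "a \<le> b" "g [^] a = g [^] (b::nat)" for a b
  proof -
    have "g [^] a \<otimes> g [^] (b - a) = g [^] (a + (b - a))"
      using gc by (simp add: nat_pow_mult)
    also have "a + (b - a) = b" using that by simp
    also have "g [^] b = g [^] a \<otimes> \<one>" using that gc by simp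
    finally have "g [^] a \<otimes> g [^] (b - a) = g [^] a \<otimes> \<one>" .
    then have "g [^] (b - a) = \<one>" using gc m_lcancel[of "g [^] a" "g [^] (b - a)" \<one>]
      by (metis nat_pow_closed one_closed pow_eq_zero_imp_aux)
    then have "N dvd b - a" using gi by simp
    moreover have "b - a < N" using that by simp
    ultimately have "\<not> 0 < b - a" using nat_dvd_not_less by blast
    then show ?thesis using that by simp
  qed
  show ?thesis unfolding inj_on_def using * by (metis lessThan_iff nat_le_linear)
qed

lemma roots_le:
  assumes fin: "finite (carrier R)" and e: "e > (0::nat)"
  shows "card {x \<in> carrier R. x \<noteq> \<zero> \<and> x [^] e = \<one>} \<le> e"
proof -
  obtain g where gc: "g \<in> carrier R" "g \<noteq> \<zero>"
    and rep: "\<And>x. x \<in> carrier R \<Longrightarrow> x \<noteq> \<zero> \<Longrightarrow> \<exists>i < card (carrier R) - 1. x = g [^] i"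
    and gi: "\<And>i. g [^] (i::nat) = \<one> \<longleftrightarrow> (card (carrier R) - 1) dvd i"
    using gen_ord[OF fin] by metis
  define N where "N = card (carrier R) - 1"
  define I where "I = {i. i < N \<and> N dvd i * e}"
  have sub: "{x \<in> carrier R. x \<noteq> \<zero> \<and> x [^] e = \<one>} \<subseteq> (\<lambda>i. g [^] i) ` I"
  proof
    fix x assume x: "x \<in> {x \<in> carrier R. x \<noteq> \<zero> \<and> x [^] e = \<one>}"
    then obtain i where i: "i < N" "x = g [^] i" using rep unfolding N_def by blast
    then have "g [^] (i * e) = \<one>" using x gc by (simp add: nat_pow_pow)
    then have "N dvd i * e" using gi unfolding N_def by simp
    then show "x \<in> (\<lambda>i. g [^] i) ` I" using i unfolding I_def by blast
  qed
  have fI: "finite I" unfolding I_def by simp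
  have "inj_on (\<lambda>i. i * e div N) I"
  proof (rule inj_onI)
    fix i j assume "i \<in> I" "j \<in> I" "i * e div N = j * e div N"
    then have "i * e = j * e" unfolding I_def by (metis dvd_div_mult_self mem_Collect_eq)
    then show "i = j" using e by simp
  qed
  moreover have "(\<lambda>i. i * e div N) ` I \<subseteq> {..<e}"
  proof clarify
    fix i assume "i \<in> I"
    then have "i < N" "N dvd i * e" unfolding I_def by auto
    then have "i * e < N * e" using e by simp
    then show "i * e div N < e" by (metis div_less_iff_less_mult mult.commute not_less0 neq0_conv \<open>i < N\<close>
        less_nat_zero_code)
  qed
  ultimately have "card I \<le> e" by (metis card_inj_on_le card_lessThan finite_lessThan)
  moreover have "card {x \<in> carrier R. x \<noteq> \<zero> \<and> x [^] e = \<one>} \<le> card I"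
    using sub fI by (meson card_image_le card_mono finite_imageI le_trans)
  ultimately show ?thesis by simp
qed

lemma roots_ge:
  assumes fin: "finite (carrier R)" and e: "e > (0::nat)" and dv: "e dvd card (carrier R) - 1"
  shows "e \<le> card {x \<in> carrier R. x \<noteq> \<zero> \<and> x [^] e = \<one>}"
proof -
  obtain g where gc: "g \<in> carrier R" "g \<noteq> \<zero>"
    and gi: "\<And>i. g [^] (i::nat) = \<one> \<longleftrightarrow> (card (carrier R) - 1) dvd i"
    using gen_ord[OF fin] by metis
  define N where "N = card (carrier R) - 1"
  obtain t where t: "N = e * t" using dv unfolding N_def by blast
  have inj: "inj_on (\<lambda>i::nat. g [^] i) {..<N}" using pow_inj_gen[OF gc] gi unfolding N_def by blast
  have "N > 0"
  proof -
    have "{\<zero>, \<one>} \<subseteq> carrier R" by simp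
    then have "card {\<zero>, \<one>} \<le> card (carrier R)" using fin by (rule card_mono[rotated])
    then show ?thesis unfolding N_def by simp
  qed
  then have t0: "t > 0" using t by (simp add: gr0I)
  have sub: "(\<lambda>i. i * t) ` {..<e} \<subseteq> {..<N}" using t t0 by auto
  have injt: "inj_on (\<lambda>i. i * t) {..<e}" using t0 by (simp add: inj_on_def)
  have "card ((\<lambda>i. g [^] i) ` ((\<lambda>i. i * t) ` {..<e})) = e"
    using card_image[OF inj_on_subset[OF inj sub]] card_image[OF injt] by simp
  moreover have "(\<lambda>i. g [^] i) ` ((\<lambda>i. i * t) ` {..<e}) \<subseteq> {x \<in> carrier R. x \<noteq> \<zero> \<and> x [^] e = \<one>}"
  proof (rule subsetI)
    fix x assume "x \<in> (\<lambda>i. g [^] i) ` ((\<lambda>i. i * t) ` {..<e})"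
    then obtain i where x: "x = g [^] (i * t)" by blast
    have "(g [^] (i * t)) [^] e = g [^] (i * N)" using gc t by (simp add: nat_pow_pow mult.commute mult.left_commute)
    also have "\<dots> = \<one>" using gi unfolding N_def by simp
    finally have 1: "(g [^] (i * t)) [^] e = \<one>" .
    have 2: "g [^] (i * t) \<in> carrier R" using gc by simp
    have 3: "g [^] (i * t) \<noteq> \<zero>" using gc pow_eq_zero_imp_aux by blast
    show "x \<in> {x \<in> carrier R. x \<noteq> \<zero> \<and> x [^] e = \<one>}" using 1 2 3 x by simp
  qed
  ultimately show ?thesis using fin by (metis (no_types, lifting) card_mono finite_subset mem_Collect_eq subsetI)
qed

end


lemma nat_dvd_pow_minus_one:
  assumes "(x::nat) \<ge> 1" shows "(x - 1) dvd (x ^ s - 1)"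
proof (induction s)
  case 0 then show ?case by simp
next
  case (Suc s)
  have "x ^ s \<ge> 1" using assms by simp
  then have "x ^ Suc s - 1 = x * (x ^ s - 1) + (x - 1)" using assms
    by (simp add: diff_mult_distrib2 algebra_simps)
  then show ?case using Suc by simp
qed

context field
begin

lemma sof_iter:
  assumes "x \<in> carrier R" "x [^] (q::nat) = x" shows "x [^] (q ^ j) = x"
proof (induction j)
  case 0 then show ?case using assms by simp
next
  case (Suc j)
  have "x [^] (q ^ Suc j) = (x [^] q) [^] (q ^ j)" using nat_pow_pow[OF assms(1), of q "q ^ j"] by simp
  then show ?case using Suc assms by simp
qed

lemma sof_fieldlike:
  assumes p: "Factorial_Ring.prime (p::nat)" and c: "add_pow R p \<one> = \<zero>" and q: "q = p ^ k"
  shows "fieldlike R (subfield_of_order R q j)"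
proof -
  define Q where "Q = q ^ j"
  have QP: "Q = p ^ (k * j)" unfolding Q_def q by (simp add: power_mult)
  have Q0: "Q \<noteq> 0" using p QP by (simp add: prime_gt_0_nat)
  have L: "subfield_of_order R q j = {x \<in> carrier R. x [^] Q = x}" unfolding subfield_of_order_def Q_def ..
  have addc: "a \<oplus> b \<in> subfield_of_order R q j" if "a \<in> subfield_of_order R q j" "b \<in> subfield_of_order R q j" for a b
    using that frob_pow[OF p c, of a b "k * j"] unfolding L QP by auto
  have negc: "\<ominus> a \<in> subfield_of_order R q j" if a: "a \<in> subfield_of_order R q j" for a
  proof -
    have ac: "a \<in> carrier R" "a [^] Q = a" using a unfolding L by auto
    have "a [^] Q \<oplus> (\<ominus> a) [^] Q = (a \<oplus> \<ominus> a) [^] Q"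
      using frob_pow[OF p c, of a "\<ominus> a" "k * j"] ac unfolding QP by simp
    also have "\<dots> = \<zero>" using ac Q0 by (simp add: r_neg nat_pow_zero)
    finally have "a \<oplus> (\<ominus> a) [^] Q = \<zero>" using ac by simp
    then have "(\<ominus> a) [^] Q = \<ominus> a" using ac
      by (metis add.inv_closed add.m_comm minus_equality nat_pow_closed)
    then show ?thesis using ac unfolding L by simp
  qed
  have invc: "inv a \<in> subfield_of_order R q j" if a: "a \<in> subfield_of_order R q j - {\<zero>}" for a
  proof -
    have ac: "a \<in> carrier R" "a [^] Q = a" "a \<noteq> \<zero>" using a unfolding L by auto
    have iu: "inv a \<in> carrier R" "inv a \<otimes> a = \<one>" using ac field_Units by auto
    have "(inv a) [^] Q \<otimes> a = (inv a) [^] Q \<otimes> a [^] Q" using ac by simp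
    also have "\<dots> = (inv a \<otimes> a) [^] Q" by (rule nat_pow_distrib[symmetric]) (use iu ac in auto)
    also have "\<dots> = \<one>" using iu by simp
    finally have e: "(inv a) [^] Q \<otimes> a = \<one>" .
    have "inv a = inv a \<otimes> ((inv a) [^] Q \<otimes> a)" using e iu by simp
    also have "\<dots> = (inv a) [^] Q \<otimes> (inv a \<otimes> a)" using m_lcomm[of "inv a" "(inv a) [^] Q" a] iu ac by simp
    also have "\<dots> = (inv a) [^] Q" using iu by simp
    finally show ?thesis using iu unfolding L by simp
  qed
  show ?thesis unfolding fieldlike_def
  proof (intro conjI ballI)
    show "subfield_of_order R q j \<subseteq> carrier R" unfolding L by auto
    show "\<one> \<in> subfield_of_order R q j" unfolding L by simp
    show "\<zero> \<in> subfield_of_order R q j" unfolding L using Q0 by (simp add: nat_pow_zero)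
  next
    fix a b assume "a \<in> subfield_of_order R q j" "b \<in> subfield_of_order R q j"
    then show "a \<oplus> b \<in> subfield_of_order R q j" "a \<otimes> b \<in> subfield_of_order R q j"
      using addc unfolding L by (auto simp: nat_pow_distrib)
  qed (use negc invc in auto)
qed

lemma sof_card:
  assumes fin: "finite (carrier R)" and card: "card (carrier R) = q ^ n" and q: "(q::nat) \<ge> 2"
    and jn: "j dvd n" and j0: "j > 0"
  shows "card (subfield_of_order R q j) = q ^ j"
proof -
  define Q where "Q = q ^ j"
  have Q1: "Q \<ge> 1" unfolding Q_def using q by simp
  have L: "subfield_of_order R q j = {x \<in> carrier R. x [^] Q = x}" unfolding subfield_of_order_def Q_def ..
  have eq: "subfield_of_order R q j - {\<zero>} = {x \<in> carrier R. x \<noteq> \<zero> \<and> x [^] (Q - 1) = \<one>}"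
  proof -
    have "x [^] Q = x \<longleftrightarrow> x [^] (Q - 1) = \<one>" if "x \<in> carrier R" "x \<noteq> \<zero>" for x
    proof -
      have "x [^] Q = x [^] (Q - 1) \<otimes> x" using Q1 that
        by (metis Suc_diff_le diff_Suc_1 nat_pow_Suc)
      moreover have "x [^] (Q - 1) \<otimes> x = \<one> \<otimes> x \<longleftrightarrow> x [^] (Q - 1) = \<one>"
        using m_rcancel[of x "x [^] (Q - 1)" \<one>] that by simp
      ultimately show ?thesis using that by simp
    qed
    then show ?thesis unfolding L by auto
  qed
  obtain s where s: "n = j * s" using jn by blast
  have dv: "(Q - 1) dvd card (carrier R) - 1"
    unfolding card s Q_def by (metis power_mult nat_dvd_pow_minus_one one_le_power q Suc_1 Suc_leD)
  have Qp: "Q - 1 > 0 \<or> Q = 1" using Q1 by auto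
  have c1: "card (subfield_of_order R q j - {\<zero>}) = Q - 1"
  proof -
    have "Q \<ge> q" unfolding Q_def using power_increasing[of 1 j q] j0 q by simp
    then have "Q - 1 > 0" using q by simp
    then show ?thesis unfolding eq using roots_le[OF fin, of "Q - 1"] roots_ge[OF fin _ dv] by (intro le_antisym) auto
  qed
  have "\<zero> \<in> subfield_of_order R q j" unfolding L using Q1 by (simp add: nat_pow_zero)
  moreover have "finite (subfield_of_order R q j)" unfolding L using fin by simp
  ultimately have "card (subfield_of_order R q j) = card (subfield_of_order R q j - {\<zero>}) + 1"
    using card_Suc_Diff1 by fastforce
  then have "card (subfield_of_order R q j) = Q - 1 + 1" using c1 by simp
  then show ?thesis using Q1 Q_def by simp
qed

end


context field
begin

lemma scale_space:
  assumes Sc: "S \<subseteq> carrier R" and U: "is_subspace R S U" and c: "c \<in> carrier R"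
  shows "is_subspace R S (scale_set R U c)"
proof -
  have Uc: "U \<subseteq> carrier R" using U unfolding is_subspace_def by blast
  show ?thesis unfolding is_subspace_def scale_set_def
  proof (intro conjI ballI)
    show "(\<lambda>u. u \<otimes> c) ` U \<subseteq> carrier R" using Uc c by auto
    have "\<zero> = \<zero> \<otimes> c" using c by simp
    then show "\<zero> \<in> (\<lambda>u. u \<otimes> c) ` U" using U unfolding is_subspace_def by blast
  next
    fix x y assume "x \<in> (\<lambda>u. u \<otimes> c) ` U" "y \<in> (\<lambda>u. u \<otimes> c) ` U"
    then obtain u v where uv: "u \<in> U" "v \<in> U" "x = u \<otimes> c" "y = v \<otimes> c" by blast
    then have "x \<oplus> y = (u \<oplus> v) \<otimes> c" using Uc c by (simp add: l_distr subsetD)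
    moreover have "u \<oplus> v \<in> U" using U uv unfolding is_subspace_def by blast
    ultimately show "x \<oplus> y \<in> (\<lambda>u. u \<otimes> c) ` U" by blast
  next
    fix s x assume s: "s \<in> S" and "x \<in> (\<lambda>u. u \<otimes> c) ` U"
    then obtain u where u: "u \<in> U" "x = u \<otimes> c" by blast
    then have "s \<otimes> x = (s \<otimes> u) \<otimes> c" using Uc c Sc s by (simp add: m_assoc subsetD)
    moreover have "s \<otimes> u \<in> U" using U u s unfolding is_subspace_def by blast
    ultimately show "s \<otimes> x \<in> (\<lambda>u. u \<otimes> c) ` U" by blast
  qed
qed

lemma scale_card:
  assumes Uc: "U \<subseteq> carrier R" and c: "c \<in> carrier R" "c \<noteq> \<zero>"
  shows "card (scale_set R U c) = card U"
  unfolding scale_set_def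
proof (rule card_image, rule inj_onI)
  fix x y assume "x \<in> U" "y \<in> U" "x \<otimes> c = y \<otimes> c"
  then show "x = y" using m_rcancel[of c x y] Uc c by auto
qed

lemma inter_space:
  "is_subspace R S U \<Longrightarrow> is_subspace R S V \<Longrightarrow> is_subspace R S (U \<inter> V)"
  unfolding is_subspace_def by blast

lemma set_add_mem: "x \<in> U <+>\<^bsub>R\<^esub> V \<longleftrightarrow> (\<exists>u\<in>U. \<exists>v\<in>V. x = u \<oplus> v)"
  unfolding set_add_def' by blast

lemma sum_space:
  assumes Sc: "S \<subseteq> carrier R" and U: "is_subspace R S U" and V: "is_subspace R S V"
  shows "is_subspace R S (U <+>\<^bsub>R\<^esub> V)"
proof -
  have Uc: "U \<subseteq> carrier R" and Vc: "V \<subseteq> carrier R" using U V unfolding is_subspace_def by auto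
  show ?thesis unfolding is_subspace_def
  proof (intro conjI ballI)
    show "U <+>\<^bsub>R\<^esub> V \<subseteq> carrier R" using Uc Vc by (auto simp: set_add_mem intro!: a_closed)
    have "\<zero> = \<zero> \<oplus> \<zero>" by simp
    then show "\<zero> \<in> U <+>\<^bsub>R\<^esub> V" using U V unfolding is_subspace_def set_add_mem by blast
  next
    fix x y assume "x \<in> U <+>\<^bsub>R\<^esub> V" "y \<in> U <+>\<^bsub>R\<^esub> V"
    then obtain u v u' v' where uv: "u \<in> U" "v \<in> V" "x = u \<oplus> v" "u' \<in> U" "v' \<in> V" "y = u' \<oplus> v'"
      unfolding set_add_mem by blast
    have uvc: "u \<in> carrier R" "v \<in> carrier R" "u' \<in> carrier R" "v' \<in> carrier R" using uv Uc Vc by auto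
    have "x \<oplus> y = (u \<oplus> u') \<oplus> (v \<oplus> v')" unfolding uv(3,6) using uvc by (simp add: a_ac)
    moreover have "u \<oplus> u' \<in> U" "v \<oplus> v' \<in> V" using U V uv unfolding is_subspace_def by auto
    ultimately show "x \<oplus> y \<in> U <+>\<^bsub>R\<^esub> V" unfolding set_add_mem by blast
  next
    fix s x assume s: "s \<in> S" and "x \<in> U <+>\<^bsub>R\<^esub> V"
    then obtain u v where uv: "u \<in> U" "v \<in> V" "x = u \<oplus> v" unfolding set_add_mem by blast
    have uvc: "u \<in> carrier R" "v \<in> carrier R" "s \<in> carrier R" using uv Uc Vc s Sc by auto
    have "s \<otimes> x = s \<otimes> u \<oplus> s \<otimes> v" unfolding uv(3) using uvc by (simp add: r_distr)
    moreover have "s \<otimes> u \<in> U" "s \<otimes> v \<in> V" using U V uv s unfolding is_subspace_def by auto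
    ultimately show "s \<otimes> x \<in> U <+>\<^bsub>R\<^esub> V" unfolding set_add_mem by blast
  qed
qed

lemma sub_sum: "is_subspace R S U \<Longrightarrow> is_subspace R S V \<Longrightarrow> U \<subseteq> U <+>\<^bsub>R\<^esub> V"
  "is_subspace R S U \<Longrightarrow> is_subspace R S V \<Longrightarrow> V \<subseteq> U <+>\<^bsub>R\<^esub> V"
proof -
  assume U: "is_subspace R S U" and V: "is_subspace R S V"
  show "U \<subseteq> U <+>\<^bsub>R\<^esub> V"
  proof
    fix u assume u: "u \<in> U"
    then have "u = u \<oplus> \<zero>" using U unfolding is_subspace_def by auto
    then show "u \<in> U <+>\<^bsub>R\<^esub> V" using u V unfolding set_add_mem is_subspace_def by blast
  qed
  show "V \<subseteq> U <+>\<^bsub>R\<^esub> V"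
  proof
    fix v assume v: "v \<in> V"
    then have "v = \<zero> \<oplus> v" using V unfolding is_subspace_def by auto
    then show "v \<in> U <+>\<^bsub>R\<^esub> V" using v U unfolding set_add_mem is_subspace_def by blast
  qed
qed

lemma dist_bound:
  assumes fin: "finite (carrier R)" and K: "fieldlike R (base_field R q)" and cK: "card (base_field R q) = q"
    and L: "fieldlike R Lf" and cL: "q ^ m \<le> card Lf"
    and UK: "is_subspace R (base_field R q) U" and VK: "is_subspace R (base_field R q) V"
    and UL: "is_subspace R Lf U" and VL: "is_subspace R Lf V"
    and ne: "U \<noteq> V" and cUV: "card U = card V"
  shows "2 * m \<le> subspace_dist R q U V"
proof -
  have LC: "Lf \<subseteq> carrier R" and KC: "base_field R q \<subseteq> carrier R" using L K unfolding fieldlike_def by auto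
  define I where "I = U \<inter> V"
  define P where "P = U <+>\<^bsub>R\<^esub> V"
  have IL: "is_subspace R Lf I" unfolding I_def by (rule inter_space[OF UL VL])
  have IK: "is_subspace R (base_field R q) I" unfolding I_def by (rule inter_space[OF UK VK])
  have PL: "is_subspace R Lf P" unfolding P_def by (rule sum_space[OF LC UL VL])
  have PK: "is_subspace R (base_field R q) P" unfolding P_def by (rule sum_space[OF KC UK VK])
  have fU: "finite U" "finite V" using space_finite[OF UK fin] space_finite[OF VK fin] by auto
  have IU: "I \<subset> U"
  proof -
    have "I \<subseteq> U" unfolding I_def by blast
    moreover have "I \<noteq> U"
    proof
      assume "I = U"
      then have "U \<subseteq> V" unfolding I_def by blast
      then have "U = V" using card_subset_eq[OF fU(2) _ cUV] by blast
      then show False using ne by simp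
    qed
    ultimately show ?thesis by blast
  qed
  have UP: "U \<subset> P"
  proof -
    have "U \<subseteq> P" "V \<subseteq> P" unfolding P_def using sub_sum[OF UK VK] by auto
    moreover have "U \<noteq> P"
    proof
      assume "U = P"
      then have "V \<subseteq> U" using \<open>V \<subseteq> P\<close> by simp
      then have "V = U" using card_subset_eq[OF fU(1) _ cUV[symmetric]] by blast
      then show False using ne by simp
    qed
    ultimately show ?thesis by blast
  qed
  have c1: "card Lf * card I \<le> card U" by (rule space_card_strict[OF L fin IL UL IU])
  have c2: "card Lf * card U \<le> card P" by (rule space_card_strict[OF L fin UL PL UP])
  have "q ^ m * (q ^ m * card I) \<le> card Lf * (card Lf * card I)"
    using cL by (intro mult_le_mono) auto
  also have "\<dots> \<le> card Lf * card U" using c1 by simp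
  also have "\<dots> \<le> card P" by (rule c2)
  finally have c3: "q ^ m * (q ^ m * card I) \<le> card P" .
  have dI: "card I = q ^ dim_over R (base_field R q) I" using dim_over_card[OF K fin IK] cK by simp
  have dP: "card P = q ^ dim_over R (base_field R q) P" using dim_over_card[OF K fin PK] cK by simp
  have q1: "q > 1" using fieldlike_card2[OF K fin] cK by simp
  have "q ^ (2 * m + dim_over R (base_field R q) I) \<le> q ^ dim_over R (base_field R q) P"
    using c3 unfolding dI dP by (simp add: power_add mult_2 mult.assoc)
  then have "2 * m + dim_over R (base_field R q) I \<le> dim_over R (base_field R q) P"
    using power_le_imp_le_exp[OF q1] by blast
  then show ?thesis unfolding subspace_dist_def I_def P_def by simp
qed

end


context field
begin

lemma fieldlike_pow:
  assumes fin: "finite (carrier R)" and S: "fieldlike R S" and x: "x \<in> S" "x \<noteq> \<zero>"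
  shows "x [^] (card S - 1) = \<one>"
proof -
  let ?G = "Multiplicative_Group.mult_of R"
  let ?H = "S - {\<zero>}"
  interpret G: group ?G by (rule field_mult_group)
  have Sc: "S \<subseteq> carrier R" using S unfolding fieldlike_def by blast
  have sg: "subgroup ?H ?G"
  proof (rule G.subgroupI)
    show "?H \<subseteq> carrier ?G" using Sc by auto
    show "?H \<noteq> {}" using S unfolding fieldlike_def by auto
  next
    fix a assume a: "a \<in> ?H"
    then have ac: "a \<in> carrier R" "a \<noteq> \<zero>" using Sc by auto
    then have "inv\<^bsub>?G\<^esub> a = inv a" using m_inv_mult_of[of a] by simp
    moreover have "inv a \<in> S" using S a unfolding fieldlike_def by blast
    moreover have "inv a \<noteq> \<zero>" using ac field_Units
      by (metis DiffI Units_l_inv l_null one_not_zero singletonD Units_closed)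
    ultimately show "inv\<^bsub>?G\<^esub> a \<in> ?H" by simp
  next
    fix a b assume ab: "a \<in> ?H" "b \<in> ?H"
    then have "a \<otimes> b \<noteq> \<zero>" using Sc integral by blast
    moreover have "a \<otimes> b \<in> S" using S ab unfolding fieldlike_def by blast
    ultimately show "a \<otimes>\<^bsub>?G\<^esub> b \<in> ?H" by simp
  qed
  interpret H: group "?G\<lparr>carrier := ?H\<rparr>" by (rule subgroup.subgroup_is_group[OF sg G.is_group])
  have "x \<in> carrier (?G\<lparr>carrier := ?H\<rparr>)" using x by simp
  then have "x [^]\<^bsub>?G\<lparr>carrier := ?H\<rparr>\<^esub> order (?G\<lparr>carrier := ?H\<rparr>) = \<one>\<^bsub>?G\<lparr>carrier := ?H\<rparr>\<^esub>"
    by (rule H.pow_order_eq_1)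
  moreover have "order (?G\<lparr>carrier := ?H\<rparr>) = card S - 1"
    using S unfolding order_def fieldlike_def by (simp add: card_Diff_singleton_if)
  moreover have "x [^]\<^bsub>?G\<lparr>carrier := ?H\<rparr>\<^esub> (k::nat) = x [^] k" for k
    by (simp add: nat_pow_def Multiplicative_Group.mult_of_def)
  ultimately show ?thesis by (simp add: Multiplicative_Group.mult_of_def)
qed

lemma stab_fieldlike:
  assumes fin: "finite (carrier R)" and K: "fieldlike R K"
    and sp: "\<forall>i<r. is_subspace R K (Fs ! i)"
  shows "fieldlike R {x \<in> carrier R. \<forall>i<r. \<forall>u\<in>Fs ! i. x \<otimes> u \<in> Fs ! i}"
    (is "fieldlike R ?S")
proof -
  have Fc: "Fs ! i \<subseteq> carrier R" if "i < r" for i using sp that unfolding is_subspace_def by blast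
  have F0: "\<zero> \<in> Fs ! i" if "i < r" for i using sp that unfolding is_subspace_def by blast
  have Fa: "u \<oplus> v \<in> Fs ! i" if "i < r" "u \<in> Fs ! i" "v \<in> Fs ! i" for i u v
    using sp that unfolding is_subspace_def by blast
  show ?thesis unfolding fieldlike_def
  proof (intro conjI ballI)
    show "?S \<subseteq> carrier R" by blast
    have "\<one> \<otimes> u \<in> Fs ! i" if "i < r" "u \<in> Fs ! i" for i u
    proof -
      have "u \<in> carrier R" using that Fc by blast
      then show ?thesis using that by simp
    qed
    then show "\<one> \<in> ?S" by simp
    have "\<zero> \<otimes> u \<in> Fs ! i" if "i < r" "u \<in> Fs ! i" for i u
    proof -
      have "u \<in> carrier R" using that Fc by blast
      then show ?thesis using that F0 by simp
    qed
    then show "\<zero> \<in> ?S" by simp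
  next
    fix a b assume a: "a \<in> ?S" and b: "b \<in> ?S"
    show "a \<oplus> b \<in> ?S"
    proof (clarify, intro conjI allI impI ballI)
      show "a \<oplus> b \<in> carrier R" using a b by simp
    next
      fix i u assume i: "i < r" and u: "u \<in> Fs ! i"
      have "(a \<oplus> b) \<otimes> u = a \<otimes> u \<oplus> b \<otimes> u" using a b Fc[OF i] u by (simp add: l_distr subsetD)
      then show "(a \<oplus> b) \<otimes> u \<in> Fs ! i" using a b i u Fa by auto
    qed
    show "a \<otimes> b \<in> ?S"
    proof (clarify, intro conjI allI impI ballI)
      show "a \<otimes> b \<in> carrier R" using a b by simp
    next
      fix i u assume i: "i < r" and u: "u \<in> Fs ! i"
      have "(a \<otimes> b) \<otimes> u = a \<otimes> (b \<otimes> u)" using a b Fc[OF i] u by (simp add: m_assoc subsetD)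
      then show "(a \<otimes> b) \<otimes> u \<in> Fs ! i" using a b i u by auto
    qed
  next
    fix a assume a: "a \<in> ?S"
    show "\<ominus> a \<in> ?S"
    proof (clarify, intro conjI allI impI ballI)
      show "\<ominus> a \<in> carrier R" using a by simp
    next
      fix i u assume i: "i < r" and u: "u \<in> Fs ! i"
      have "(\<ominus> a) \<otimes> u = \<ominus> (a \<otimes> u)" using a Fc[OF i] u by (simp add: l_minus subsetD)
      moreover have "a \<otimes> u \<in> Fs ! i" using a i u by auto
      ultimately show "(\<ominus> a) \<otimes> u \<in> Fs ! i" using space_neg[OF K] sp i by auto
    qed
  next
    fix a assume a: "a \<in> ?S - {\<zero>}"
    have ac: "a \<in> carrier R" "a \<noteq> \<zero>" using a by auto
    have au: "a \<in> Units R" using ac field_Units by auto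
    show "inv a \<in> ?S"
    proof (clarify, intro conjI allI impI ballI)
      show "inv a \<in> carrier R" using au by simp
    next
      fix i u assume i: "i < r" and u: "u \<in> Fs ! i"
      have fin_i: "finite (Fs ! i)" using Fc[OF i] fin by (rule finite_subset)
      have "(\<lambda>w. a \<otimes> w) ` (Fs ! i) = Fs ! i"
      proof (rule endo_inj_surj[OF fin_i])
        show "(\<lambda>w. a \<otimes> w) ` (Fs ! i) \<subseteq> Fs ! i" using a i by auto
        show "inj_on (\<lambda>w. a \<otimes> w) (Fs ! i)"
          by (rule inj_onI) (use m_lcancel ac Fc[OF i] in blast)
      qed
      then obtain w where w: "w \<in> Fs ! i" "u = a \<otimes> w" using u by blast
      have wc: "w \<in> carrier R" using w Fc[OF i] by blast
      have "inv a \<otimes> u = (inv a \<otimes> a) \<otimes> w" unfolding w(2)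
        using m_assoc[OF Units_inv_closed[OF au] Units_closed[OF au] wc] by simp
      also have "\<dots> = w" using au wc by simp
      finally show "inv a \<otimes> u \<in> Fs ! i" using w by simp
    qed
  qed
qed

lemma big_sub:
  assumes fin: "finite (carrier R)" and card: "card (carrier R) = q ^ n" and q: "q \<ge> 2"
    and K: "fieldlike R (base_field R q)" and cK: "card (base_field R q) = q"
    and S: "fieldlike R S" and KS: "base_field R q \<subseteq> S"
  shows "\<exists>e. card S = q ^ e \<and> e dvd n \<and> (e > 0 \<longrightarrow> subfield_of_order R q e \<subseteq> S)"
proof -
  have Sc: "S \<subseteq> carrier R" using S unfolding fieldlike_def by blast
  have SK: "is_subspace R (base_field R q) S"
    using S KS unfolding is_subspace_def fieldlike_def by blast
  define e where "e = dim_over R (base_field R q) S"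
  have cS: "card S = q ^ e" unfolding e_def using dim_over_card[OF K fin SK] cK by simp
  have RS: "is_subspace R S (carrier R)" using Sc unfolding is_subspace_def by auto
  have "card (carrier R) = card S ^ dim_over R S (carrier R)" by (rule dim_over_card[OF S fin RS])
  then have "q ^ n = q ^ (e * dim_over R S (carrier R))" using card cS by (simp add: power_mult)
  then have "n = e * dim_over R S (carrier R)" using q by (simp add: power_inject_exp)
  then have edvd: "e dvd n" by simp
  have sub: "subfield_of_order R q e \<subseteq> S" if e0: "e > 0"
  proof
    fix x assume x: "x \<in> subfield_of_order R q e"
    then have xc: "x \<in> carrier R" "x [^] (q ^ e) = x" unfolding subfield_of_order_def by auto
    show "x \<in> S"
    proof (cases "x = \<zero>")
      case True then show ?thesis using S unfolding fieldlike_def by simp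
    next
      case False
      define Q where "Q = q ^ e"
      have Qq: "Q \<ge> q" unfolding Q_def using power_increasing[of 1 e q] e0 q by simp
      have QS: "Q = Suc (Q - 1)" using Qq q by simp
      have "x [^] Q = x [^] (Suc (Q - 1))" using QS by simp
      also have "\<dots> = x [^] (Q - 1) \<otimes> x" by (rule nat_pow_Suc)
      finally have "x [^] Q = x [^] (Q - 1) \<otimes> x" .
      then have "x [^] (Q - 1) \<otimes> x = \<one> \<otimes> x" using xc Q_def by simp
      then have x1: "x [^] (Q - 1) = \<one>" using m_rcancel[of x "x [^] (Q - 1)" \<one>] xc False by simp
      define roots where "roots = {y \<in> carrier R. y \<noteq> \<zero> \<and> y [^] (Q - 1) = \<one>}"
      have "S - {\<zero>} \<subseteq> roots" unfolding roots_def using fieldlike_pow[OF fin S] cS Q_def Sc by auto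
      moreover have "card roots \<le> card (S - {\<zero>})"
      proof -
        have "card roots \<le> Q - 1" unfolding roots_def using roots_le[OF fin, of "Q - 1"] Qq q by simp
        moreover have "card (S - {\<zero>}) = Q - 1" using S cS Q_def unfolding fieldlike_def
          by (simp add: card_Diff_singleton_if)
        ultimately show ?thesis by simp
      qed
      moreover have "finite roots" unfolding roots_def using fin by simp
      ultimately have "S - {\<zero>} = roots" by (metis card_seteq)
      moreover have "x \<in> roots" unfolding roots_def using xc x1 False by simp
      ultimately show ?thesis by blast
    qed
  qed
  show ?thesis using cS edvd sub by blast
qed

end


lemma scale_flag_length [simp]: "length (scale_flag R Fs c) = length Fs"
  unfolding scale_flag_def by simp

lemma scale_flag_nth [simp]: "i < length Fs \<Longrightarrow> scale_flag R Fs c ! i = scale_set R (Fs ! i) c"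
  unfolding scale_flag_def by simp

context field
begin

lemma main_thm:
  fixes q n m :: nat and Fs :: "'a set list" and \<beta> :: 'a
  assumes fin: "finite (carrier R)"
    and qp: "\<exists>p k. Factorial_Ring.prime (p::nat) \<and> k > 0 \<and> q = p ^ k"
    and n0: "n > 0" and card: "card (carrier R) = q ^ n"
    and flag: "is_flag R q Fs"
    and bf: "is_best_friend R q n Fs m"
    and \<beta>c: "\<beta> \<in> carrier R" and \<beta>0: "\<beta> \<noteq> \<zero>" and \<beta>L: "\<beta> \<notin> subfield_of_order R q m"
    and disj: "disjoint_code (length Fs) (orbit_code R \<beta> Fs)"
  shows "2 * m * length Fs \<le> min_flag_dist R q (orbit_code R \<beta> Fs)"
proof -
  obtain p k where p: "Factorial_Ring.prime p" and k0: "k > 0" and qpk: "q = p ^ k" using qp by blast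
  have p2: "p \<ge> 2" using prime_ge_2_nat[OF p] .
  have q2: "q \<ge> 2" unfolding qpk using power_increasing[of 1 k p] k0 p2 by simp
  have cardp: "card (carrier R) = p ^ (k * n)" using card qpk by (simp add: power_mult)
  have char: "add_pow R p \<one> = \<zero>" by (rule char_prime[OF fin cardp p])
  have Kf: "fieldlike R (subfield_of_order R q 1)" by (rule sof_fieldlike[OF p char qpk])
  have cK: "card (subfield_of_order R q 1) = q" using sof_card[OF fin card q2, of 1] by simp
  have KC: "subfield_of_order R q 1 \<subseteq> carrier R" using Kf unfolding fieldlike_def by blast
  have m0: "m > 0" and mn: "m dvd n"
    and Lsp: "\<forall>i<length Fs. is_subspace R (subfield_of_order R q m) (Fs ! i)"
    and best: "\<And>m'. is_friend R q n Fs m' \<Longrightarrow> m' \<le> m"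
    using bf unfolding is_best_friend_def is_friend_def by auto
  have Lf: "fieldlike R (subfield_of_order R q m)" by (rule sof_fieldlike[OF p char qpk])
  have cL: "card (subfield_of_order R q m) = q ^ m" by (rule sof_card[OF fin card q2 mn m0])
  have LC: "subfield_of_order R q m \<subseteq> carrier R" using Lf unfolding fieldlike_def by blast
  have Ksp: "\<forall>i<length Fs. is_subspace R (subfield_of_order R q 1) (Fs ! i)"
    using flag unfolding is_flag_def by auto
  define r where "r = length Fs"
  have Fc: "Fs ! i \<subseteq> carrier R" if "i < r" for i using Ksp that unfolding r_def is_subspace_def by blast
  have grp: "group (mult_of R)" unfolding mult_of_same by (rule field_mult_group)
  have \<beta>m: "\<beta> \<in> carrier (mult_of R)" using \<beta>c \<beta>0 by simp
  have finm: "finite (carrier (mult_of R))" using fin by simp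
  define ordb where "ordb = group.ord (mult_of R) \<beta>"
  have o1: "ordb \<ge> 1" unfolding ordb_def by (rule group.ord_ge_1[OF grp finm \<beta>m])
  have \<beta>1: "\<beta> \<noteq> \<one>"
  proof
    assume "\<beta> = \<one>"
    moreover have "\<one> \<in> subfield_of_order R q m" using Lf unfolding fieldlike_def by blast
    ultimately show False using \<beta>L by simp
  qed
  have "ordb \<noteq> 1" unfolding ordb_def using group.ord_eq_1[OF grp \<beta>m] \<beta>1 by simp
  then have o2: "ordb \<ge> 2" using o1 by simp
  define C where "C = orbit_code R \<beta> Fs"
  have C_eq: "C = (\<lambda>j. scale_flag R Fs (\<beta> [^] j)) ` {..<ordb}"
    unfolding C_def orbit_code_def ordb_def by auto
  have finC: "finite C" unfolding C_eq by simp
  have claim2: "2 * m * r \<le> flag_dist R q F G" if FG: "F \<in> C" "G \<in> C" "F \<noteq> G" for F G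
  proof -
    obtain a where a: "F = scale_flag R Fs (\<beta> [^] (a::nat))" using FG(1) unfolding C_eq by blast
    obtain b where b: "G = scale_flag R Fs (\<beta> [^] (b::nat))" using FG(2) unfolding C_eq by blast
    have ac: "\<beta> [^] a \<in> carrier R" "\<beta> [^] a \<noteq> \<zero>" using \<beta>c \<beta>0 pow_eq_zero_imp_aux by auto
    have bc: "\<beta> [^] b \<in> carrier R" "\<beta> [^] b \<noteq> \<zero>" using \<beta>c \<beta>0 pow_eq_zero_imp_aux by auto
    have each: "2 * m \<le> subspace_dist R q (F ! i) (G ! i)" if i: "i < r" for i
    proof -
      have "card ((\<lambda>F. F ! i) ` C) = card C" using disj i unfolding disjoint_code_def C_def r_def by auto
      then have "inj_on (\<lambda>F. F ! i) C" using eq_card_imp_inj_on[OF finC] by blast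
      then have ne: "F ! i \<noteq> G ! i" using FG unfolding inj_on_def by blast
      have iF: "i < length Fs" using i r_def by simp
      have Fi: "F ! i = scale_set R (Fs ! i) (\<beta> [^] a)" "G ! i = scale_set R (Fs ! i) (\<beta> [^] b)"
        using a b iF by auto
      show ?thesis unfolding Fi
      proof (rule dist_bound[OF fin Kf cK Lf])
        show "q ^ m \<le> card (subfield_of_order R q m)" using cL by simp
        show "is_subspace R (subfield_of_order R q 1) (scale_set R (Fs ! i) (\<beta> [^] a))"
          by (rule scale_space[OF KC _ ac(1)]) (use Ksp iF in auto)
        show "is_subspace R (subfield_of_order R q 1) (scale_set R (Fs ! i) (\<beta> [^] b))"
          by (rule scale_space[OF KC _ bc(1)]) (use Ksp iF in auto)
        show "is_subspace R (subfield_of_order R q m) (scale_set R (Fs ! i) (\<beta> [^] a))"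
          by (rule scale_space[OF LC _ ac(1)]) (use Lsp iF in auto)
        show "is_subspace R (subfield_of_order R q m) (scale_set R (Fs ! i) (\<beta> [^] b))"
          by (rule scale_space[OF LC _ bc(1)]) (use Lsp iF in auto)
        show "scale_set R (Fs ! i) (\<beta> [^] a) \<noteq> scale_set R (Fs ! i) (\<beta> [^] b)" using ne Fi by simp
        show "card (scale_set R (Fs ! i) (\<beta> [^] a)) = card (scale_set R (Fs ! i) (\<beta> [^] b))"
          using scale_card[OF Fc[OF i] ac] scale_card[OF Fc[OF i] bc] by simp
      qed
    qed
    have "flag_dist R q F G = (\<Sum>i<r. subspace_dist R q (F ! i) (G ! i))"
      unfolding flag_dist_def a r_def by simp
    also have "\<dots> \<ge> (\<Sum>i<r. 2 * m)" by (rule sum_mono) (use each in auto)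
    finally show ?thesis by (simp add: mult.commute)
  qed
  have claim1: "\<not> card C \<le> 1"
  proof
    assume c1: "card C \<le> 1"
    have sc1: "scale_flag R Fs \<one> = Fs"
    proof (rule nth_equalityI)
      show "length (scale_flag R Fs \<one>) = length Fs" by simp
      fix i assume "i < length (scale_flag R Fs \<one>)"
      then have i: "i < r" unfolding r_def by simp
      have "scale_set R (Fs ! i) \<one> = Fs ! i" unfolding scale_set_def
        using Fc[OF i] by (auto simp: image_iff subsetD)
      then show "scale_flag R Fs \<one> ! i = Fs ! i" using i r_def by simp
    qed
    have "Fs \<in> C" unfolding C_eq using o1 sc1 by (auto intro!: image_eqI[of _ _ 0])
    moreover have "scale_flag R Fs \<beta> \<in> C" unfolding C_eq using o2 \<beta>c
      by (auto intro!: image_eqI[of _ _ 1])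
    ultimately have eqF: "scale_flag R Fs \<beta> = Fs" using c1 finC card_le_Suc0_iff_eq by (metis One_nat_def)
    define S where "S = {x \<in> carrier R. \<forall>i<r. \<forall>u\<in>Fs ! i. x \<otimes> u \<in> Fs ! i}"
    have Sf: "fieldlike R S" unfolding S_def by (rule stab_fieldlike[OF fin Kf]) (use Ksp r_def in auto)
    have LS: "subfield_of_order R q m \<subseteq> S"
      using Lsp LC unfolding S_def r_def is_subspace_def by blast
    have KL: "subfield_of_order R q 1 \<subseteq> subfield_of_order R q m"
      unfolding subfield_of_order_def using sof_iter by auto
    have \<beta>S: "\<beta> \<in> S"
    proof -
      have "\<beta> \<otimes> u \<in> Fs ! i" if i: "i < r" and u: "u \<in> Fs ! i" for i u
      proof -
        have "scale_set R (Fs ! i) \<beta> = Fs ! i" using eqF i r_def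
          by (metis scale_flag_nth)
        moreover have "u \<otimes> \<beta> \<in> scale_set R (Fs ! i) \<beta>" unfolding scale_set_def using u by blast
        moreover have "u \<otimes> \<beta> = \<beta> \<otimes> u" using u Fc[OF i] \<beta>c by (simp add: m_comm subsetD)
        ultimately show ?thesis by simp
      qed
      then show ?thesis unfolding S_def using \<beta>c by blast
    qed
    obtain e where e: "card S = q ^ e" "e dvd n" "e > 0 \<longrightarrow> subfield_of_order R q e \<subseteq> S"
      using big_sub[OF fin card q2 Kf cK Sf] KL LS by blast
    have finS: "finite S" using Sf fin unfolding fieldlike_def by (auto intro: finite_subset)
    have "subfield_of_order R q m \<subset> S" using LS \<beta>S \<beta>L by blast
    then have "card (subfield_of_order R q m) < card S" using finS by (rule psubset_card_mono[rotated])
    then have "q ^ m < q ^ e" using cL e(1) by simp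
    then have me: "m < e" using power_less_imp_less_exp q2 by (metis One_nat_def Suc_1 Suc_le_lessD)
    then have e0: "e > 0" by simp
    have "is_friend R q n Fs e" unfolding is_friend_def
    proof (intro conjI allI impI)
      show "0 < e" by (rule e0)
      show "e dvd n" by (rule e(2))
      fix i assume i: "i < length Fs"
      show "is_subspace R (subfield_of_order R q e) (Fs ! i)"
        using Ksp i e(3) e0 unfolding is_subspace_def S_def r_def by blast
    qed
    then have "e \<le> m" by (rule best)
    then show False using me by simp
  qed
  define D where "D = {flag_dist R q F G | F G. F \<in> C \<and> G \<in> C \<and> F \<noteq> G}"
  have "D \<subseteq> (\<lambda>(F, G). flag_dist R q F G) ` (C \<times> C)" unfolding D_def by auto
  then have finD: "finite D" using finC by (auto intro: finite_subset)
  obtain F G where "F \<in> C" "G \<in> C" "F \<noteq> G" using claim1 finC card_le_Suc0_iff_eq by (metis One_nat_def)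
  then have Dne: "D \<noteq> {}" unfolding D_def by blast
  have "\<forall>d\<in>D. 2 * m * r \<le> d" unfolding D_def using claim2 by blast
  then have "2 * m * r \<le> Min D" using finD Dne by simp
  moreover have "min_flag_dist R q C = Min D" unfolding min_flag_dist_def D_def using claim1 by simp
  ultimately show ?thesis unfolding C_def r_def by simp
qed

end

theorem proposition4p20:
  fixes R :: "('a, 'b) ring_scheme" and q n m :: nat and Fs :: "'a set list" and \<beta> :: 'a
  assumes "field R" and "finite (carrier R)"
    and "\<exists>p k. Factorial_Ring.prime (p::nat) \<and> k > 0 \<and> q = p ^ k"
    and "n > 0" and "card (carrier R) = q ^ n"
    and "is_flag R q Fs"
    and "is_best_friend R q n Fs m"
    and "\<beta> \<in> carrier R" and "\<beta> \<noteq> \<zero>\<^bsub>R\<^esub>" and "\<beta> \<notin> subfield_of_order R q m"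
    and "disjoint_code (length Fs) (orbit_code R \<beta> Fs)"
  shows "2 * m * length Fs \<le> min_flag_dist R q (orbit_code R \<beta> Fs)"
  using field.main_thm[OF assms(1) assms(2-)] .

end
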